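(* Let $(A,B)$ be a complete bipartite graph with parts $A$ and $B$, $|A|,|B|>2$, whose edges are coloured red and blue so that every vertex of $A$ is incident to at least one blue edge and every vertex of $B$ is incident to at least one red edge. Then $(A,B)$ contains a cycle of length $4$ whose edges are alternately red and blue. *)

theory Defs
  imports Main
begin

datatype colour = Red | Blue

text \<open>A red/blue edge colouring of the complete bipartite graph with parts A and B is
  given by a function c; only its values c a b with a in A and b in B matter
  (c a b is the colour of the edge ab).\<close>

definition alt_C4 :: "'v set \<Rightarrow> 'v set \<Rightarrow> ('v \<Rightarrow> 'v \<Rightarrow> colour) \<Rightarrow> bool" where
  "alt_C4 A B c \<longleftrightarrow> (\<exists>a1 a2 b1 b2. a1 \<in> A \<and> a2 \<in> A \<and> b1 \<in> B \<and> b2 \<in> B \<and>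
      a1 \<noteq> a2 \<and> b1 \<noteq> b2 \<and>
      c a1 b1 = Red \<and> c a2 b1 = Blue \<and> c a2 b2 = Red \<and> c a1 b2 = Blue)"

end

theory Submission
  imports Defs
begin

lemma colour_not_red: "x \<noteq> Red \<Longrightarrow> x = Blue"
  by (cases x) auto

theorem proposition2p3:
  fixes A B :: "'v set" and c :: "'v \<Rightarrow> 'v \<Rightarrow> colour"
  assumes "finite A" "finite B" "A \<inter> B = {}"
    and "card A > 2" "card B > 2"
    and "\<forall>a\<in>A. \<exists>b\<in>B. c a b = Blue"
    and "\<forall>b\<in>B. \<exists>a\<in>A. c a b = Red"
  shows "alt_C4 A B c"
proof (rule ccontr)
  assume nC: "\<not> alt_C4 A B c"
  define R where "R a = {b\<in>B. c a b = Red}" for a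
  have chain: "R a1 \<subseteq> R a2 \<or> R a2 \<subseteq> R a1" if "a1 \<in> A" "a2 \<in> A" for a1 a2
  proof (rule ccontr)
    assume "\<not> (R a1 \<subseteq> R a2 \<or> R a2 \<subseteq> R a1)"
    then obtain b1 b2 where b1: "b1 \<in> R a1" "b1 \<notin> R a2" and b2: "b2 \<in> R a2" "b2 \<notin> R a1"
      by blast
    have "c a2 b1 = Blue" "c a1 b2 = Blue"
      using b1 b2 colour_not_red unfolding R_def by auto
    moreover have "a1 \<noteq> a2" "b1 \<noteq> b2" using b1 b2 by auto
    moreover have "c a1 b1 = Red" "c a2 b2 = Red" "b1 \<in> B" "b2 \<in> B"
      using b1 b2 unfolding R_def by auto
    ultimately have "alt_C4 A B c"
      unfolding alt_C4_def using that by (intro exI[of _ a1] exI[of _ a2] exI[of _ b1] exI[of _ b2]) simp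
    with nC show False by simp
  qed
  have "A \<noteq> {}" using assms(4) by auto
  define m where "m = Max ((\<lambda>a. card (R a)) ` A)"
  have "m \<in> (\<lambda>a. card (R a)) ` A" unfolding m_def
    using assms(1) \<open>A \<noteq> {}\<close> by (intro Max_in) auto
  then obtain s where s: "s \<in> A" "card (R s) = m" by auto
  have fin: "finite (R a)" for a using assms(2) unfolding R_def by auto
  have sub: "R a \<subseteq> R s" if "a \<in> A" for a
  proof -
    have "card (R a) \<le> card (R s)" using s(2) that assms(1) unfolding m_def by (metis Max_ge finite_imageI image_eqI)
    moreover have "R a \<subseteq> R s \<or> R s \<subseteq> R a" using chain that s(1) by blast
    ultimately show ?thesis using fin[of s] card_subset_eq[of "R a" "R s"] by (metis card_mono fin le_antisym)
  qed
  obtain b where b: "b \<in> B" "c s b = Blue" using assms(6) s(1) by blast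
  obtain a where a: "a \<in> A" "c a b = Red" using assms(7) b(1) by blast
  have "b \<in> R a" using a b unfolding R_def by auto
  then have "b \<in> R s" using sub a(1) by blast
  then show False using b unfolding R_def by auto
qed

end
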